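(* Every admissible Kähler class $\Omega_{\mathbf r}$ on a KS orbifold $(S_{\mathbf n},\Delta_{\mathbf m})$ contains an admissible extremal Kähler metric whose scalar curvature is an affine-linear function of $\mathfrak z$. This metric has constant scalar curvature (which is then positive) if and only if $\alpha_0\beta_1-\alpha_1\beta_0=0$. Here, for $r=0,1$, - $\alpha_r=\int_{-1}^1t^rp_c(t)\,dt$; - $\beta_r=\int_{-1}^1\bigl(r_1s_1(1+r_2t)+r_2s_2(1+r_1t)\bigr)t^r\,dt+(-1)^r\frac{p_c(-1)}{m_\infty}+\frac{p_c(1)}{m_0}$; with $s_i=2/n_i$. Equivalently, the condition is $f(r_1,r_2)=0$, where $f(r_1,r_2)=9(m_0-m_\infty)n_1n_2-6(m_0+m_\infty)n_1n_2(r_1+r_2)+6(m_0-m_\infty)n_1n_2r_1r_2+3n_2(4m_0m_\infty-n_1(m_0-m_\infty))r_1^2+3n_1(4m_0m_\infty-n_2(m_0-m_\infty))r_2^2-(4m_0m_\infty(n_1+n_2)-3(m_0-m_\infty)n_1n_2)r_1^2r_2^2$.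
   Context: Setup. $S_{\mathbf n}=\mathbb P(\mathbb 1\oplus\mathcal O(n_1,n_2))\to\mathbb{CP}^1\times\mathbb{CP}^1$ with $n_1,n_2\in\mathbb Z\setminus\{0\}$. The KS orbifold $(S_{\mathbf n},\Delta_{\mathbf m})$, with $m_0,m_\infty\in\mathbb Z^+$, has cyclic isotropy $\mathbb Z_{m_0}$ along the zero section $e_0$ and $\mathbb Z_{m_\infty}$ along the infinity section $e_\infty$. Cohomology. Let $x_1,x_2$ be the pullbacks of the generators of $H^2$ of the two $\mathbb{CP}^1$ factors, and $x_3$ the Poincaré dual of $e_\infty$. Parameters. Fix reals $r_1,r_2$ with $0<|r_i|<1$ and $r_in_i>0$, put $p_c(t)=(1+r_1t)(1+r_2t)$, and define $\Omega_{\mathbf r}/2\pi=\frac{n_1(1+r_1)}{r_1}x_1+\frac{n_2(1+r_2)}{r_2}x_2+2x_3$. Admissible metric. An admissible metric in $\Omega_{\mathbf r}$ is $g=\sum_i\frac{1+r_i\mathfrak z}{r_i}g_i+\frac{d\mathfrak z^2}{\Theta}+\Theta\theta^2$, where: - $g_i$ is a metric on $\mathbb{CP}^1$ with $\pm g_i>0$ and scalar curvature $2s_i=4/n_i$; - $\mathfrak z$ is the fiberwise moment map with $e_0=\{\mathfrak z=1\}$ and $e_\infty=\{\mathfrak z=-1\}$; - $d\theta=\omega_1+\omega_2$; - $\Theta=F/p_c$, with $F>0$ on $(-1,1)$, $F(\pm1)=0$, $F'(-1)=2p_c(-1)/m_\infty$ and $F'(1)=-2p_c(1)/m_0$. Its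 scalar curvature is $\frac{2s_1r_1}{1+r_1\mathfrak z}+\frac{2s_2r_2}{1+r_2\mathfrak z}-\frac{F''(\mathfrak z)}{p_c(\mathfrak z)}$. *)

theory Defs
  imports "HOL-Analysis.Analysis"
begin

text \<open>Admissible data on the KS orbifold: parameters n1 n2 (nonzero integers),
  m0 minf (positive integers), r1 r2 real with 0 < abs ri < 1 and ri * ni > 0.
  An admissible metric in the class Omega_r is determined by the profile
  function F on [-1,1]; Theta = F / p_c.\<close>

definition pc :: "real \<Rightarrow> real \<Rightarrow> real \<Rightarrow> real" where
  "pc r1 r2 t = (1 + r1 * t) * (1 + r2 * t)"

definition sc :: "int \<Rightarrow> real" where
  "sc n = 2 / real_of_int n"

definition ks_params :: "int \<Rightarrow> int \<Rightarrow> int \<Rightarrow> int \<Rightarrow> real \<Rightarrow> real \<Rightarrow> bool" where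
  "ks_params n1 n2 m0 minf r1 r2 \<longleftrightarrow>
     n1 \<noteq> 0 \<and> n2 \<noteq> 0 \<and> m0 > 0 \<and> minf > 0 \<and>
     0 < \<bar>r1\<bar> \<and> \<bar>r1\<bar> < 1 \<and> 0 < \<bar>r2\<bar> \<and> \<bar>r2\<bar> < 1 \<and>
     r1 * real_of_int n1 > 0 \<and> r2 * real_of_int n2 > 0"

definition admissible_profile :: "int \<Rightarrow> int \<Rightarrow> real \<Rightarrow> real \<Rightarrow> (real \<Rightarrow> real) \<Rightarrow> bool" where
  "admissible_profile m0 minf r1 r2 F \<longleftrightarrow>
     (\<forall>k. \<forall>z\<in>{-1..1}. ((deriv ^^ k) F) differentiable (at z)) \<and>
     (\<forall>z\<in>{-1<..<1}. F z > 0) \<and> F (-1) = 0 \<and> F 1 = 0 \<and>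
     deriv F (-1) = 2 * pc r1 r2 (-1) / real_of_int minf \<and>
     deriv F 1 = - 2 * pc r1 r2 1 / real_of_int m0"

definition scal :: "int \<Rightarrow> int \<Rightarrow> real \<Rightarrow> real \<Rightarrow> (real \<Rightarrow> real) \<Rightarrow> real \<Rightarrow> real" where
  "scal n1 n2 r1 r2 F z =
     2 * sc n1 * r1 / (1 + r1 * z) + 2 * sc n2 * r2 / (1 + r2 * z)
     - (deriv ^^ 2) F z / pc r1 r2 z"

definition extremal_profile :: "int \<Rightarrow> int \<Rightarrow> real \<Rightarrow> real \<Rightarrow> (real \<Rightarrow> real) \<Rightarrow> bool" where
  "extremal_profile n1 n2 r1 r2 F \<longleftrightarrow>
     (\<exists>A B. \<forall>z\<in>{-1..1}. scal n1 n2 r1 r2 F z = A * z + B)"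

definition alpha :: "real \<Rightarrow> real \<Rightarrow> nat \<Rightarrow> real" where
  "alpha r1 r2 r = integral {-1..1} (\<lambda>t. t ^ r * pc r1 r2 t)"

definition beta :: "int \<Rightarrow> int \<Rightarrow> int \<Rightarrow> int \<Rightarrow> real \<Rightarrow> real \<Rightarrow> nat \<Rightarrow> real" where
  "beta n1 n2 m0 minf r1 r2 r =
     integral {-1..1} (\<lambda>t. (r1 * sc n1 * (1 + r2 * t) + r2 * sc n2 * (1 + r1 * t)) * t ^ r)
     + (-1) ^ r * pc r1 r2 (-1) / real_of_int minf + pc r1 r2 1 / real_of_int m0"

definition fpoly :: "int \<Rightarrow> int \<Rightarrow> int \<Rightarrow> int \<Rightarrow> real \<Rightarrow> real \<Rightarrow> real" where
  "fpoly n1 n2 m0 minf r1 r2 =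
    (let N1 = real_of_int n1; N2 = real_of_int n2; M0 = real_of_int m0; Mi = real_of_int minf in
     9 * (M0 - Mi) * N1 * N2 - 6 * (M0 + Mi) * N1 * N2 * (r1 + r2)
     + 6 * (M0 - Mi) * N1 * N2 * r1 * r2
     + 3 * N2 * (4 * M0 * Mi - N1 * (M0 - Mi)) * r1 ^ 2
     + 3 * N1 * (4 * M0 * Mi - N2 * (M0 - Mi)) * r2 ^ 2
     - (4 * M0 * Mi * (N1 + N2) - 3 * (M0 - Mi) * N1 * N2) * r1 ^ 2 * r2 ^ 2)"

end

theory Submission
  imports Defs
begin



definition ea0 :: "real\<Rightarrow>real\<Rightarrow>real\<Rightarrow>real" where "ea0 a b B = a + b - B"
definition ea1 :: "real\<Rightarrow>real\<Rightarrow>real\<Rightarrow>real\<Rightarrow>real\<Rightarrow>real\<Rightarrow>real" where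
  "ea1 a b r1 r2 A B = a*r2 + b*r1 - A - B*(r1+r2)"
definition ea2 :: "real\<Rightarrow>real\<Rightarrow>real\<Rightarrow>real\<Rightarrow>real" where "ea2 r1 r2 A B = -(A*(r1+r2) + B*r1*r2)"
definition ea3 :: "real\<Rightarrow>real\<Rightarrow>real\<Rightarrow>real" where "ea3 r1 r2 A = -(A*r1*r2)"

definition P2 :: "real\<Rightarrow>real\<Rightarrow>real\<Rightarrow>real\<Rightarrow>real\<Rightarrow>real\<Rightarrow>real\<Rightarrow>real" where
  "P2 a b r1 r2 A B z = a*(1+r2*z) + b*(1+r1*z) - (A*z+B)*pc r1 r2 z"

definition K1 :: "real\<Rightarrow>real\<Rightarrow>real\<Rightarrow>real\<Rightarrow>real\<Rightarrow>real\<Rightarrow>real\<Rightarrow>real" where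
  "K1 a b r1 r2 A B z = ea0 a b B*z + ea1 a b r1 r2 A B*z^2/2 + ea2 r1 r2 A B*z^3/3 + ea3 r1 r2 A*z^4/4"
definition K0 :: "real\<Rightarrow>real\<Rightarrow>real\<Rightarrow>real\<Rightarrow>real\<Rightarrow>real\<Rightarrow>real\<Rightarrow>real" where
  "K0 a b r1 r2 A B z = ea0 a b B*z^2/2 + ea1 a b r1 r2 A B*z^3/6 + ea2 r1 r2 A B*z^4/12 + ea3 r1 r2 A*z^5/20"
definition G1 :: "real\<Rightarrow>real\<Rightarrow>real\<Rightarrow>real\<Rightarrow>real\<Rightarrow>real\<Rightarrow>real\<Rightarrow>real" where
  "G1 a b r1 r2 A B z = ea0 a b B*z^2/2 + ea1 a b r1 r2 A B*z^3/3 + ea2 r1 r2 A B*z^4/4 + ea3 r1 r2 A*z^5/5"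

lemma K0_deriv: "(K0 a b r1 r2 A B has_real_derivative K1 a b r1 r2 A B z) (at z)"
  unfolding K0_def K1_def
  apply (rule derivative_eq_intros refl | simp)+
  by (simp add: field_simps eval_nat_numeral)

lemma K1_deriv: "(K1 a b r1 r2 A B has_real_derivative P2 a b r1 r2 A B z) (at z)"
  unfolding K1_def P2_def pc_def ea0_def ea1_def ea2_def ea3_def
  apply (rule derivative_eq_intros refl | simp)+
  by (simp add: field_simps eval_nat_numeral)

lemma G1_deriv: "(G1 a b r1 r2 A B has_real_derivative z * P2 a b r1 r2 A B z) (at z)"
  unfolding G1_def P2_def pc_def ea0_def ea1_def ea2_def ea3_def
  apply (rule derivative_eq_intros refl | simp)+
  by (simp add: field_simps eval_nat_numeral)




lemma inv_conv:
  fixes c r x y w :: real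
  assumes c: "c \<ge> 0" and xy: "x<y" and yw: "y<w" and hx: "1+r*x>0" and hw: "1+r*w>0"
  shows "(w-x)*(c/(1+r*y)) \<le> (w-y)*(c/(1+r*x)) + (y-x)*(c/(1+r*w))"
proof -
  define uu where "uu = 1+r*x"
  define vv where "vv = 1+r*w"
  define mm where "mm = 1+r*y"
  have LM: "(w-x)*mm = (w-y)*uu + (y-x)* vv" unfolding uu_def vv_def mm_def by (simp add: algebra_simps)
  have uu: "uu>0" and vv: "vv>0" using hx hw uu_def vv_def by auto
  have "(w-x)*mm > 0" using LM uu vv xy yw by (simp add: add_pos_pos)
  then have mm: "mm > 0" using xy yw by (simp add: zero_less_mult_iff)
  have key: "(w-x)*(w-x)*uu* vv \<le> ((w-x)*mm)*((w-y)* vv + (y-x)*uu)"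
  proof -
    have "((w-x)*mm)*((w-y)* vv + (y-x)*uu) - (w-x)*(w-x)*uu* vv = (w-y)*(y-x)*(uu-vv)^2"
      unfolding LM by (simp add: algebra_simps power2_eq_square)
    moreover have "(w-y)*(y-x)*(uu-vv)^2 \<ge> 0" using xy yw by simp
    ultimately show ?thesis by linarith
  qed
  have "(w-x)/mm \<le> (w-y)/uu + (y-x)/vv"
  proof -
    have "(w-x)/mm = ((w-x)*(w-x)*uu* vv) / ((w-x)*mm*uu* vv)" using xy yw uu vv mm by (simp add: field_simps)
    also have "\<dots> \<le> (((w-x)*mm)*((w-y)* vv + (y-x)*uu)) / ((w-x)*mm*uu* vv)"
      using key xy yw uu vv mm by (intro divide_right_mono) auto
    also have "\<dots> = (w-y)/uu + (y-x)/vv" using xy yw uu vv mm by (simp add: field_simps)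
    finally show ?thesis .
  qed
  then have "c*((w-x)/mm) \<le> c*((w-y)/uu + (y-x)/vv)" using c by (rule mult_left_mono)
  then show ?thesis unfolding uu_def vv_def mm_def by (simp add: field_simps)
qed

lemma positivity:
  fixes F Fd Fdd g q :: "real \<Rightarrow> real"
  assumes dF: "\<And>z. (F has_real_derivative Fd z) (at z)"
    and dF1: "\<And>z. (Fd has_real_derivative Fdd z) (at z)"
    and Fm: "F (-1) = 0" and Fp: "F 1 = 0" and F1m: "Fd (-1) > 0" and F1p: "Fd 1 < 0"
    and F2g: "\<And>z. -1 \<le> z \<Longrightarrow> z \<le> 1 \<Longrightarrow> Fdd z = q z * g z"
    and qpos: "\<And>z. -1 \<le> z \<Longrightarrow> z \<le> 1 \<Longrightarrow> q z > 0"
    and conv: "\<And>x y w. -1 \<le> x \<Longrightarrow> x < y \<Longrightarrow> y < w \<Longrightarrow> w \<le> 1 \<Longrightarrow>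
                  (w-x)*g y \<le> (w-y)*g x + (y-x)*g w"
    and z0: "-1 < z0" "z0 < 1"
  shows "F z0 > 0"
proof (rule ccontr)
  assume "\<not> F z0 > 0"
  then have Fz: "F z0 \<le> 0" by simp
  obtain x1 where x1: "-1 < x1" "x1 < z0" "F z0 - F (-1) = (z0 - (-1)) * Fd x1"
    using MVT2[of "-1" z0 F Fd] dF z0 by blast
  have F1x1: "Fd x1 \<le> 0" using x1 Fz Fm by (smt (verit) mult_pos_pos)
  obtain x2 where x2: "z0 < x2" "x2 < 1" "F 1 - F z0 = (1 - z0) * Fd x2"
    using MVT2[of z0 1 F Fd] dF z0 by blast
  have F1x2: "Fd x2 \<ge> 0" using x2 Fz Fp by (smt (verit) mult_pos_neg)
  obtain y1 where y1: "-1 < y1" "y1 < x1" "Fd x1 - Fd (-1) = (x1 - (-1)) * Fdd y1"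
    using MVT2[of "-1" x1 Fd Fdd] dF1 x1 by blast
  have "Fdd y1 < 0" using y1 F1x1 F1m by (smt (verit) mult_nonneg_nonneg)
  then have gy1: "g y1 < 0" using F2g[of y1] qpos[of y1] y1 x1 z0
    by (auto simp: mult_less_0_iff)
  obtain y3 where y3: "x2 < y3" "y3 < 1" "Fd 1 - Fd x2 = (1 - x2) * Fdd y3"
    using MVT2[of x2 1 Fd Fdd] dF1 x2 by blast
  have "Fdd y3 < 0" using y3 F1x2 F1p by (smt (verit) mult_nonneg_nonneg)
  then have gy3: "g y3 < 0" using F2g[of y3] qpos[of y3] y3 x2 z0
    by (auto simp: mult_less_0_iff)
  obtain y2 where y2: "x1 < y2" "y2 < x2" "Fd x2 - Fd x1 = (x2 - x1) * Fdd y2"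
    using MVT2[of x1 x2 Fd Fdd] dF1 x1 x2 by fastforce
  have "Fdd y2 \<ge> 0" using y2 F1x1 F1x2 by (smt (verit) mult_pos_neg)
  then have gy2: "g y2 \<ge> 0" using F2g[of y2] qpos[of y2] y2 x1 x2 z0
    by (auto simp: zero_le_mult_iff)
  have c: "(y3-y1)*g y2 \<le> (y3-y2)*g y1 + (y2-y1)*g y3"
    using conv[of y1 y2 y3] y1 y2 y3 x1 x2 by linarith
  have "(y3-y2)*g y1 < 0" using gy1 y2 y3 x2 by (simp add: mult_pos_neg)
  moreover have "(y2-y1)*g y3 < 0" using gy3 y1 y2 by (simp add: mult_pos_neg)
  moreover have "(y3-y1)*g y2 \<ge> 0" using gy2 y1 y2 y3 x1 x2 by simp
  ultimately show False using c by linarith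
qed




lemma ftc_real:
  fixes f f' :: "real \<Rightarrow> real"
  assumes "a \<le> b" and "\<And>x. x \<in> {a..b} \<Longrightarrow> (f has_real_derivative f' x) (at x)"
  shows "(f' has_integral (f b - f a)) {a..b}"
  apply (rule fundamental_theorem_of_calculus[OF assms(1)])
  using assms(2) by (auto simp: has_real_derivative_iff_has_vector_derivative intro: has_vector_derivative_at_within)

lemma lin_pos:
  fixes r z :: real
  assumes "\<bar>r\<bar> < 1" "-1 \<le> z" "z \<le> 1"
  shows "1 + r*z > 0"
proof -
  have "\<bar>z\<bar> \<le> 1" using assms by auto
  then have "\<bar>r*z\<bar> \<le> \<bar>r\<bar>" by (simp add: abs_mult mult_left_le)
  then show ?thesis using assms(1) by linarith
qed

lemma pc_pos:
  assumes "\<bar>r1\<bar> < 1" "\<bar>r2\<bar> < 1" "-1 \<le> z" "z \<le> 1"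
  shows "pc r1 r2 z > 0"
  unfolding pc_def using lin_pos[of r1 z] lin_pos[of r2 z] assms by simp

lemma alpha0: "alpha r1 r2 0 = 2 + 2*r1*r2/3"
proof -
  have "((\<lambda>t. t ^ 0 * pc r1 r2 t) has_integral
     ((\<lambda>t. t + (r1+r2)*t^2/2 + r1*r2*t^3/3) 1 - (\<lambda>t. t + (r1+r2)*t^2/2 + r1*r2*t^3/3) (-1))) {-1..1}"
    by (rule ftc_real) (auto intro!: derivative_eq_intros simp: pc_def field_simps eval_nat_numeral)
  then show ?thesis unfolding alpha_def by (simp add: integral_unique field_simps)
qed

lemma alpha1: "alpha r1 r2 1 = 2*(r1+r2)/3"
proof -
  have "((\<lambda>t. t ^ 1 * pc r1 r2 t) has_integral
     ((\<lambda>t. t^2/2 + (r1+r2)*t^3/3 + r1*r2*t^4/4) 1 - (\<lambda>t. t^2/2 + (r1+r2)*t^3/3 + r1*r2*t^4/4) (-1))) {-1..1}"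
    by (rule ftc_real) (auto intro!: derivative_eq_intros simp: pc_def field_simps eval_nat_numeral)
  then show ?thesis unfolding alpha_def by (simp add: integral_unique field_simps)
qed

lemma beta0: "beta n1 n2 m0 minf r1 r2 0 = 2*(r1* sc n1 + r2* sc n2) + pc r1 r2 (-1) / real_of_int minf + pc r1 r2 1 / real_of_int m0"
proof -
  let ?G = "\<lambda>t. r1 * sc n1 * (t + r2*t^2/2) + r2 * sc n2 * (t + r1*t^2/2)"
  have "((\<lambda>t. (r1 * sc n1 * (1 + r2 * t) + r2 * sc n2 * (1 + r1 * t)) * t ^ 0) has_integral (?G 1 - ?G (-1))) {-1..1}"
    by (rule ftc_real) (auto intro!: derivative_eq_intros simp: field_simps eval_nat_numeral)
  then show ?thesis unfolding beta_def by (simp add: integral_unique field_simps)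
qed

lemma beta1: "beta n1 n2 m0 minf r1 r2 1 = 2/3*(r1* sc n1*r2 + r2* sc n2*r1) - pc r1 r2 (-1) / real_of_int minf + pc r1 r2 1 / real_of_int m0"
proof -
  let ?G = "\<lambda>t. r1 * sc n1 * (t^2/2 + r2*t^3/3) + r2 * sc n2 * (t^2/2 + r1*t^3/3)"
  have "((\<lambda>t. (r1 * sc n1 * (1 + r2 * t) + r2 * sc n2 * (1 + r1 * t)) * t ^ 1) has_integral (?G 1 - ?G (-1))) {-1..1}"
    by (rule ftc_real) (auto intro!: derivative_eq_intros simp: field_simps eval_nat_numeral)
  then show ?thesis unfolding beta_def by (simp add: integral_unique field_simps)
qed




lemma extremal_eqs:
  assumes ks: "ks_params n1 n2 m0 minf r1 r2" and adm: "admissible_profile m0 minf r1 r2 F"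
    and scl: "\<forall>z\<in>{-1..1}. scal n1 n2 r1 r2 F z = A*z+B"
  shows "2*ea0 (2 * sc n1 * r1) (2 * sc n2 * r2) B + 2*ea2 r1 r2 A B/3
           = - 2 * pc r1 r2 1 / real_of_int m0 - 2 * pc r1 r2 (-1) / real_of_int minf"
    and "2*ea1 (2 * sc n1 * r1) (2 * sc n2 * r2) r1 r2 A B/3 + 2*ea3 r1 r2 A/5
           = 2 * pc r1 r2 (-1) / real_of_int minf - 2 * pc r1 r2 1 / real_of_int m0"
proof -
  define a where "a = 2 * sc n1 * r1"
  define b where "b = 2 * sc n2 * r2"
  have r1: "\<bar>r1\<bar> < 1" and r2: "\<bar>r2\<bar> < 1" using ks unfolding ks_params_def by auto
  have sm: "\<forall>k. \<forall>z\<in>{-1..1}. ((deriv ^^ k) F) differentiable (at z)"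
    and Fm: "F (-1) = 0" and Fp: "F 1 = 0"
    and F1m: "deriv F (-1) = 2 * pc r1 r2 (-1) / real_of_int minf"
    and F1p: "deriv F 1 = - 2 * pc r1 r2 1 / real_of_int m0"
    using adm unfolding admissible_profile_def by auto
  have dF: "(F has_real_derivative deriv F z) (at z)" if "z \<in> {-1..1}" for z
    using spec[OF sm, of 0] that by (simp add: DERIV_deriv_iff_real_differentiable)
  have dF1: "(deriv F has_real_derivative deriv (deriv F) z) (at z)" if "z \<in> {-1..1}" for z
    using spec[OF sm, of 1] that by (simp add: DERIV_deriv_iff_real_differentiable)
  have F2: "deriv (deriv F) z = P2 a b r1 r2 A B z" if z: "z \<in> {-1..1}" for z
  proof -
    have p1: "1 + r1*z > 0" using lin_pos[of r1 z] r1 z by auto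
    have p2: "1 + r2*z > 0" using lin_pos[of r2 z] r2 z by auto
    have "scal n1 n2 r1 r2 F z = A*z+B" using scl z by auto
    then have "a/(1+r1*z) + b/(1+r2*z) - deriv (deriv F) z / ((1+r1*z)*(1+r2*z)) = A*z+B"
      unfolding scal_def a_def b_def pc_def by (simp add: numeral_2_eq_2)
    then have h: "deriv (deriv F) z / ((1+r1*z)*(1+r2*z)) = a/(1+r1*z) + b/(1+r2*z) - (A*z+B)"
      by linarith
    have pz: "(1+r1*z)*(1+r2*z) > 0" using p1 p2 by simp
    have "deriv (deriv F) z = (a/(1+r1*z) + b/(1+r2*z) - (A*z+B)) * ((1+r1*z)*(1+r2*z))"
      using h pz p1 p2 by (simp add: divide_eq_eq)
    also have "\<dots> = P2 a b r1 r2 A B z"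
    proof -
      have gen: "(a/u + b/w - L)*(u*w) = a*w + b*u - L*(u*w)" if "u \<noteq> 0" "w \<noteq> 0" for u w L :: real
        using that by (simp add: field_simps)
      show ?thesis using gen[of "1+r1*z" "1+r2*z" "A*z+B"] p1 p2 unfolding P2_def pc_def by simp
    qed
    finally show ?thesis .
  qed
  have I0: "((\<lambda>t. deriv (deriv F) t) has_integral (deriv F 1 - deriv F (-1))) {-1..1}"
    by (rule ftc_real) (auto intro: dF1)
  then have I0': "(P2 a b r1 r2 A B has_integral (deriv F 1 - deriv F (-1))) {-1..1}"
    by (subst has_integral_cong[where g="\<lambda>t. deriv (deriv F) t"]) (auto simp: F2)
  have J0: "(P2 a b r1 r2 A B has_integral (K1 a b r1 r2 A B 1 - K1 a b r1 r2 A B (-1))) {-1..1}"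
    by (rule ftc_real) (auto intro: K1_deriv)
  have e1: "K1 a b r1 r2 A B 1 - K1 a b r1 r2 A B (-1) = deriv F 1 - deriv F (-1)"
    using has_integral_unique[OF J0 I0'] .
  have I1: "((\<lambda>t. t * deriv (deriv F) t) has_integral
      ((\<lambda>t. t * deriv F t - F t) 1 - (\<lambda>t. t * deriv F t - F t) (-1))) {-1..1}"
    apply (rule ftc_real)
     apply simp
    subgoal for x
      using dF[of x] dF1[of x]
      by (auto intro!: derivative_eq_intros)
    done
  then have I1': "((\<lambda>t. t * P2 a b r1 r2 A B t) has_integral
      ((\<lambda>t. t * deriv F t - F t) 1 - (\<lambda>t. t * deriv F t - F t) (-1))) {-1..1}"
    by (subst has_integral_cong[where g="\<lambda>t. t * deriv (deriv F) t"]) (auto simp: F2)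
  have J1: "((\<lambda>t. t * P2 a b r1 r2 A B t) has_integral (G1 a b r1 r2 A B 1 - G1 a b r1 r2 A B (-1))) {-1..1}"
    by (rule ftc_real) (auto intro: G1_deriv)
  have e2: "G1 a b r1 r2 A B 1 - G1 a b r1 r2 A B (-1) = (\<lambda>t. t * deriv F t - F t) 1 - (\<lambda>t. t * deriv F t - F t) (-1)"
    using has_integral_unique[OF J1 I1'] .
  show "2*ea0 (2 * sc n1 * r1) (2 * sc n2 * r2) B + 2*ea2 r1 r2 A B/3
           = - 2 * pc r1 r2 1 / real_of_int m0 - 2 * pc r1 r2 (-1) / real_of_int minf"
  proof -
    have "2*ea0 a b B + 2*ea2 r1 r2 A B/3 = deriv F 1 - deriv F (-1)"
      using e1 unfolding K1_def by (simp add: field_simps)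
    then show ?thesis using F1m F1p unfolding a_def b_def by simp
  qed
  show "2*ea1 (2 * sc n1 * r1) (2 * sc n2 * r2) r1 r2 A B/3 + 2*ea3 r1 r2 A/5
           = 2 * pc r1 r2 (-1) / real_of_int minf - 2 * pc r1 r2 1 / real_of_int m0"
  proof -
    have "2*ea1 a b r1 r2 A B/3 + 2*ea3 r1 r2 A/5 = deriv F 1 + deriv F (-1)"
      using e2 Fm Fp unfolding G1_def by (simp add: field_simps)
    then show ?thesis using F1m F1p unfolding a_def b_def by simp
  qed
qed




definition al2 :: "real \<Rightarrow> real \<Rightarrow> real" where "al2 r1 r2 = 2/3 + 2*r1*r2/5"

lemma sys_iff:
  "(2*ea0 (2 * sc n1 * r1) (2 * sc n2 * r2) B + 2*ea2 r1 r2 A B/3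
           = - 2 * pc r1 r2 1 / real_of_int m0 - 2 * pc r1 r2 (-1) / real_of_int minf
   \<and> 2*ea1 (2 * sc n1 * r1) (2 * sc n2 * r2) r1 r2 A B/3 + 2*ea3 r1 r2 A/5
           = 2 * pc r1 r2 (-1) / real_of_int minf - 2 * pc r1 r2 1 / real_of_int m0)
   \<longleftrightarrow> (A * alpha r1 r2 1 + B * alpha r1 r2 0 = 2 * beta n1 n2 m0 minf r1 r2 0
       \<and> A * al2 r1 r2 + B * alpha r1 r2 1 = 2 * beta n1 n2 m0 minf r1 r2 1)"
proof -
  define P where "P = pc r1 r2 1 / real_of_int m0"
  define Q where "Q = pc r1 r2 (-1) / real_of_int minf"
  have e1: "2 * pc r1 r2 1 / real_of_int m0 = 2*P" and e2: "2 * pc r1 r2 (-1) / real_of_int minf = 2*Q"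
    unfolding P_def Q_def by simp_all
  have e3: "- 2 * pc r1 r2 1 / real_of_int m0 = - 2*P" unfolding P_def by simp
  have a: "(2*ea0 (2 * sc n1 * r1) (2 * sc n2 * r2) B + 2*ea2 r1 r2 A B/3 = - 2*P - 2*Q)
     \<longleftrightarrow> (A * alpha r1 r2 1 + B * alpha r1 r2 0 = 2 * beta n1 n2 m0 minf r1 r2 0)"
    unfolding ea0_def ea2_def alpha0 alpha1 beta0 P_def[symmetric] Q_def[symmetric]
    by (simp add: field_simps) (intro iffI; linarith)
  have b: "(2*ea1 (2 * sc n1 * r1) (2 * sc n2 * r2) r1 r2 A B/3 + 2*ea3 r1 r2 A/5 = 2*Q - 2*P)
     \<longleftrightarrow> (A * al2 r1 r2 + B * alpha r1 r2 1 = 2 * beta n1 n2 m0 minf r1 r2 1)"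
    unfolding ea1_def ea3_def al2_def alpha1 beta1 P_def[symmetric] Q_def[symmetric]
    by (simp add: field_simps) (intro iffI; linarith)
  show ?thesis unfolding e3 e2 e1 using a b by blast
qed




lemma det_pos:
  assumes "\<bar>r1\<bar> < 1" "\<bar>r2\<bar> < 1"
  shows "alpha r1 r2 0 * al2 r1 r2 - (alpha r1 r2 1)^2 > 0"
proof -
  have s1: "r1^2 < 1" and s2: "r2^2 < 1" using assms by (simp_all add: abs_square_less_1)
  have p: "(r1*r2)^2 \<ge> 0" by simp
  have "alpha r1 r2 0 * al2 r1 r2 - (alpha r1 r2 1)^2
        = 4/3 - 4*r1^2/9 - 4*r2^2/9 + 16*(r1*r2)/45 + 4*(r1*r2)^2/15"
    unfolding alpha0 alpha1 al2_def by (simp add: field_simps power2_eq_square)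
  moreover have "16*(r1*r2) \<ge> -8*r1^2 - 8*r2^2"
    using sum_squares_ge_zero[of "r1+r2" 0] by (simp add: power2_eq_square algebra_simps)
  ultimately show ?thesis using s1 s2 p by linarith
qed

lemma A_iff:
  fixes x0 x1 x2 y0 y1 A B :: real
  assumes "A*x1 + B*x0 = 2*y0" "A*x2 + B*x1 = 2*y1" "x0*x2 - x1^2 > 0"
  shows "A = 0 \<longleftrightarrow> x0*y1 - x1*y0 = 0"
proof -
  have "A*(x0*x2 - x1^2) = 2*(x0*y1 - x1*y0)"
  proof -
    have "A*(x0*x2 - x1^2) = x0*(A*x2 + B*x1) - x1*(A*x1 + B*x0)" by (simp add: algebra_simps power2_eq_square)
    then show ?thesis using assms(1,2) by (simp add: algebra_simps)
  qed
  then show ?thesis using assms(3) by auto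
qed

lemma cramer:
  fixes x0 x1 x2 y0 y1 :: real
  assumes d: "x0*x2 - x1^2 \<noteq> 0"
  defines "A \<equiv> 2*(x0*y1 - x1*y0)/(x0*x2 - x1^2)" and "B \<equiv> 2*(x2*y0 - x1*y1)/(x0*x2 - x1^2)"
  shows "A*x1 + B*x0 = 2*y0" "A*x2 + B*x1 = 2*y1"
proof -
  define d where "d = x0*x2 - x1^2"
  have "A*x1 + B*x0 = (2*(x0*y1 - x1*y0)*x1 + 2*(x2*y0 - x1*y1)*x0)/d"
    unfolding A_def B_def d_def by (simp add: add_divide_distrib)
  also have "\<dots> = (2*y0)*d/d" unfolding d_def by (simp add: algebra_simps power2_eq_square)
  also have "\<dots> = 2*y0" using d unfolding d_def by simp
  finally show "A*x1 + B*x0 = 2*y0" .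
  have "A*x2 + B*x1 = (2*(x0*y1 - x1*y0)*x2 + 2*(x2*y0 - x1*y1)*x1)/d"
    unfolding A_def B_def d_def by (simp add: add_divide_distrib)
  also have "\<dots> = (2*y1)*d/d" unfolding d_def by (simp add: algebra_simps power2_eq_square)
  also have "\<dots> = 2*y1" using d unfolding d_def by simp
  finally show "A*x2 + B*x1 = 2*y1" .
qed

lemma fpoly_iff:
  assumes ks: "ks_params n1 n2 m0 minf r1 r2"
  shows "alpha r1 r2 0 * beta n1 n2 m0 minf r1 r2 1 - alpha r1 r2 1 * beta n1 n2 m0 minf r1 r2 0 = 0
        \<longleftrightarrow> fpoly n1 n2 m0 minf r1 r2 = 0"
proof -
  have n1: "real_of_int n1 \<noteq> 0" and n2: "real_of_int n2 \<noteq> 0" and m0: "real_of_int m0 \<noteq> 0"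
    and mi: "real_of_int minf \<noteq> 0" using ks unfolding ks_params_def by auto
  have "(alpha r1 r2 0 * beta n1 n2 m0 minf r1 r2 1 - alpha r1 r2 1 * beta n1 n2 m0 minf r1 r2 0)
        * (real_of_int n1 * real_of_int n2 * real_of_int m0 * real_of_int minf)
        = -2/9 * fpoly n1 n2 m0 minf r1 r2"
    unfolding alpha0 alpha1 beta0 beta1 fpoly_def Let_def sc_def pc_def
    using n1 n2 m0 mi by (simp add: field_simps power2_eq_square)
  then show ?thesis using n1 n2 m0 mi by auto
qed




definition Ff :: "real\<Rightarrow>real\<Rightarrow>real\<Rightarrow>real\<Rightarrow>real\<Rightarrow>real\<Rightarrow>real\<Rightarrow>real\<Rightarrow>real" where
  "Ff a b r1 r2 A B D z = K0 a b r1 r2 A B z - K0 a b r1 r2 A B (-1) + (D - K1 a b r1 r2 A B (-1))*(z+1)"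
definition F1f :: "real\<Rightarrow>real\<Rightarrow>real\<Rightarrow>real\<Rightarrow>real\<Rightarrow>real\<Rightarrow>real\<Rightarrow>real\<Rightarrow>real" where
  "F1f a b r1 r2 A B D z = K1 a b r1 r2 A B z - K1 a b r1 r2 A B (-1) + D"

lemma Ff_deriv: "(Ff a b r1 r2 A B D has_real_derivative F1f a b r1 r2 A B D z) (at z)"
  unfolding Ff_def F1f_def
  by (auto intro!: derivative_eq_intros K0_deriv)

lemma F1f_deriv: "(F1f a b r1 r2 A B D has_real_derivative P2 a b r1 r2 A B z) (at z)"
  unfolding F1f_def
  by (auto intro!: derivative_eq_intros K1_deriv)

lemma deriv_Ff: "deriv (Ff a b r1 r2 A B D) = F1f a b r1 r2 A B D"
  using Ff_deriv DERIV_imp_deriv by blast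

lemma deriv_F1f: "deriv (F1f a b r1 r2 A B D) = P2 a b r1 r2 A B"
  using F1f_deriv DERIV_imp_deriv by blast

lemma rpf_Ff: "real_polynomial_function (Ff a b r1 r2 A B D)"
proof -
  have x: "real_polynomial_function (\<lambda>x::real. x)"
    by (rule real_polynomial_function.intros(1)) (rule bounded_linear_ident)
  show ?thesis
    unfolding Ff_def K0_def K1_def
    by (intro real_polynomial_function.intros(2) real_polynomial_function.intros(3) real_polynomial_function.intros(4)
        real_polynomial_function_diff real_polynomial_function_divide real_polynomial_function_power x)
qed

lemma rpf_deriv:
  fixes f :: "real \<Rightarrow> real"
  assumes "real_polynomial_function f"
  shows "real_polynomial_function (deriv f)"
proof -
  obtain p' where p': "real_polynomial_function p'" "\<And>x. (f has_real_derivative p' x) (at x)"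
    using has_real_derivative_polynomial_function[OF assms] by blast
  have "deriv f = p'" using p'(2) DERIV_imp_deriv by blast
  then show ?thesis using p'(1) by simp
qed

lemma rpf_iter:
  fixes f :: "real \<Rightarrow> real"
  assumes "real_polynomial_function f"
  shows "real_polynomial_function ((deriv ^^ k) f)"
  by (induction k) (auto simp: assms rpf_deriv)

lemma Ff_end:
  assumes "2*ea0 a b B + 2*ea2 r1 r2 A B/3 = -E - D" "2*ea1 a b r1 r2 A B/3 + 2*ea3 r1 r2 A/5 = D - E"
  shows "Ff a b r1 r2 A B D 1 = 0" "F1f a b r1 r2 A B D 1 = -E" "Ff a b r1 r2 A B D (-1) = 0"
    "F1f a b r1 r2 A B D (-1) = D"
proof -
  have "Ff a b r1 r2 A B D 1 = (2*ea0 a b B + 2*ea2 r1 r2 A B/3) - (2*ea1 a b r1 r2 A B/3 + 2*ea3 r1 r2 A/5) + 2*D"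
    unfolding Ff_def K0_def K1_def by (simp add: field_simps)
  then show "Ff a b r1 r2 A B D 1 = 0" using assms by simp
  have "F1f a b r1 r2 A B D 1 = (2*ea0 a b B + 2*ea2 r1 r2 A B/3) + D"
    unfolding F1f_def K1_def by (simp add: field_simps)
  then show "F1f a b r1 r2 A B D 1 = -E" using assms by simp
  show "Ff a b r1 r2 A B D (-1) = 0" "F1f a b r1 r2 A B D (-1) = D"
    unfolding Ff_def F1f_def by simp_all
qed

lemma P2_eq:
  assumes "1+r1*z \<noteq> 0" "1+r2*z \<noteq> 0"
  shows "P2 a b r1 r2 A B z = pc r1 r2 z * (a/(1+r1*z) + b/(1+r2*z) - (A*z+B))"
proof -
  have gen: "(a/u + b/w - L)*(u*w) = a*w + b*u - L*(u*w)" if "u \<noteq> 0" "w \<noteq> 0" for u w L :: real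
    using that by (simp add: field_simps)
  show ?thesis using gen[of "1+r1*z" "1+r2*z" "A*z+B"] assms unfolding P2_def pc_def
    by (simp add: mult.commute)
qed

lemma g_conv:
  fixes a b r1 r2 A B x y w :: real
  assumes a: "a \<ge> 0" and b: "b \<ge> 0" and r1: "\<bar>r1\<bar> < 1" and r2: "\<bar>r2\<bar> < 1"
    and xy: "-1 \<le> x" "x < y" "y < w" "w \<le> 1"
  defines "g \<equiv> \<lambda>z. a/(1+r1*z) + b/(1+r2*z) - (A*z+B)"
  shows "(w-x)*g y \<le> (w-y)*g x + (y-x)*g w"
proof -
  have c1: "(w-x)*(a/(1+r1*y)) \<le> (w-y)*(a/(1+r1*x)) + (y-x)*(a/(1+r1*w))"
    using inv_conv[of a x y w r1] a xy lin_pos[of r1 x] lin_pos[of r1 w] r1 by auto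
  have c2: "(w-x)*(b/(1+r2*y)) \<le> (w-y)*(b/(1+r2*x)) + (y-x)*(b/(1+r2*w))"
    using inv_conv[of b x y w r2] b xy lin_pos[of r2 x] lin_pos[of r2 w] r2 by auto
  have lin: "(w-x)*(A*y+B) = (w-y)*(A*x+B) + (y-x)*(A*w+B)" by (simp add: algebra_simps)
  have gg: "(t-s)*g q = (t-s)*(a/(1+r1*q)) + (t-s)*(b/(1+r2*q)) - (t-s)*(A*q+B)" for t s q
    unfolding g_def by (simp add: algebra_simps)
  show ?thesis using c1 c2 lin gg[of w x y] gg[of w y x] gg[of y x w] by linarith
qed




theorem mainTheorem12:
  fixes n1 n2 m0 minf :: int and r1 r2 :: real
  assumes "ks_params n1 n2 m0 minf r1 r2"
  shows "(\<exists>F. admissible_profile m0 minf r1 r2 F \<and> extremal_profile n1 n2 r1 r2 F)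
    \<and> (\<forall>F. admissible_profile m0 minf r1 r2 F \<and> extremal_profile n1 n2 r1 r2 F \<longrightarrow>
          ((\<exists>c. \<forall>z\<in>{-1..1}. scal n1 n2 r1 r2 F z = c) \<longleftrightarrow>
             alpha r1 r2 0 * beta n1 n2 m0 minf r1 r2 1 - alpha r1 r2 1 * beta n1 n2 m0 minf r1 r2 0 = 0)
        \<and> (\<forall>c. (\<forall>z\<in>{-1..1}. scal n1 n2 r1 r2 F z = c) \<longrightarrow> c > 0))
    \<and> (alpha r1 r2 0 * beta n1 n2 m0 minf r1 r2 1 - alpha r1 r2 1 * beta n1 n2 m0 minf r1 r2 0 = 0
        \<longleftrightarrow> fpoly n1 n2 m0 minf r1 r2 = 0)"
proof -
  note ks = assms
  have r1: "\<bar>r1\<bar> < 1" and r2: "\<bar>r2\<bar> < 1" and m0: "real_of_int m0 > 0" and mi: "real_of_int minf > 0"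
    and rn1: "r1 * real_of_int n1 > 0" and rn2: "r2 * real_of_int n2 > 0"
    using ks unfolding ks_params_def by auto
  define a where "a = 2 * sc n1 * r1"
  define b where "b = 2 * sc n2 * r2"
  have s1: "r1 * sc n1 > 0"
  proof -
    have "r1 * sc n1 = 2 * (r1 * real_of_int n1) / (real_of_int n1)^2"
      unfolding sc_def using rn1 by (auto simp: field_simps power2_eq_square)
    moreover have "real_of_int n1 \<noteq> 0" using rn1 by auto
    ultimately show ?thesis using rn1 by (simp add: zero_less_divide_iff)
  qed
  have s2: "r2 * sc n2 > 0"
  proof -
    have "r2 * sc n2 = 2 * (r2 * real_of_int n2) / (real_of_int n2)^2"
      unfolding sc_def using rn2 by (auto simp: field_simps power2_eq_square)
    moreover have "real_of_int n2 \<noteq> 0" using rn2 by auto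
    ultimately show ?thesis using rn2 by (simp add: zero_less_divide_iff)
  qed
  have apos: "a > 0" using s1 unfolding a_def by (simp add: mult.commute mult.left_commute)
  have bpos: "b > 0" using s2 unfolding b_def by (simp add: mult.commute mult.left_commute)
  have pcm: "pc r1 r2 (-1) > 0" and pcp: "pc r1 r2 1 > 0" using pc_pos r1 r2 by auto
  define D where "D = 2 * pc r1 r2 (-1) / real_of_int minf"
  define E where "E = 2 * pc r1 r2 1 / real_of_int m0"
  have Dpos: "D > 0" using pcm mi unfolding D_def by simp
  have Epos: "E > 0" using pcp m0 unfolding E_def by simp
  define x0 where "x0 = alpha r1 r2 0"
  define x1 where "x1 = alpha r1 r2 1"
  define x2 where "x2 = al2 r1 r2"
  define y0 where "y0 = beta n1 n2 m0 minf r1 r2 0"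
  define y1 where "y1 = beta n1 n2 m0 minf r1 r2 1"
  have det: "x0*x2 - x1^2 > 0" using det_pos[OF r1 r2] unfolding x0_def x1_def x2_def .
  have x0pos: "x0 > 0"
  proof -
    have "\<bar>r1\<bar>*\<bar>r2\<bar> \<le> \<bar>r1\<bar>" using r2 by (simp add: mult_left_le)
    then have "\<bar>r1*r2\<bar> < 1" using r1 by (simp add: abs_mult)
    then show ?thesis unfolding x0_def alpha0 by auto
  qed
  have y0pos: "y0 > 0" unfolding y0_def beta0 using s1 s2 pcm pcp m0 mi by (simp add: add_pos_pos)
  have eE: "- 2 * pc r1 r2 1 / real_of_int m0 = -E" unfolding E_def by simp
  have eD: "2 * pc r1 r2 (-1) / real_of_int minf = D" unfolding D_def by simp
  have eE2: "2 * pc r1 r2 1 / real_of_int m0 = E" unfolding E_def by simp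
  have P3: "alpha r1 r2 0 * beta n1 n2 m0 minf r1 r2 1 - alpha r1 r2 1 * beta n1 n2 m0 minf r1 r2 0 = 0
        \<longleftrightarrow> fpoly n1 n2 m0 minf r1 r2 = 0" using fpoly_iff[OF ks] .
  have P2part: "((\<exists>c. \<forall>z\<in>{-1..1}. scal n1 n2 r1 r2 F z = c) \<longleftrightarrow>
             alpha r1 r2 0 * beta n1 n2 m0 minf r1 r2 1 - alpha r1 r2 1 * beta n1 n2 m0 minf r1 r2 0 = 0)
        \<and> (\<forall>c. (\<forall>z\<in>{-1..1}. scal n1 n2 r1 r2 F z = c) \<longrightarrow> c > 0)"
    if adm: "admissible_profile m0 minf r1 r2 F" and ext: "extremal_profile n1 n2 r1 r2 F" for F
  proof -
    obtain A B where AB: "\<forall>z\<in>{-1..1}. scal n1 n2 r1 r2 F z = A*z+B"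
      using ext unfolding extremal_profile_def by blast
    have L: "A*x1 + B*x0 = 2*y0" "A*x2 + B*x1 = 2*y1"
      using extremal_eqs[OF ks adm AB] sys_iff[of n1 r1 n2 r2 B A m0 minf]
      unfolding x0_def x1_def x2_def y0_def y1_def by auto
    have Aiff: "A = 0 \<longleftrightarrow> x0*y1 - x1*y0 = 0" using A_iff[OF L det] .
    have const: "(\<forall>z\<in>{-1..1}. scal n1 n2 r1 r2 F z = c) \<longleftrightarrow> (A = 0 \<and> B = c)" for c
    proof
      assume h: "\<forall>z\<in>{-1..1}. scal n1 n2 r1 r2 F z = c"
      have "scal n1 n2 r1 r2 F 1 = c" "scal n1 n2 r1 r2 F (-1) = c" "scal n1 n2 r1 r2 F 0 = c" using h by auto
      moreover have "scal n1 n2 r1 r2 F 1 = A*1+B" "scal n1 n2 r1 r2 F (-1) = A*(-1)+B"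
        "scal n1 n2 r1 r2 F 0 = A*0+B" using AB by auto
      ultimately have "A*1+B = c" "A*(-1)+B = c" "A*0+B = c" by auto
      then show "A = 0 \<and> B = c" by linarith
    next
      assume "A = 0 \<and> B = c" then show "\<forall>z\<in>{-1..1}. scal n1 n2 r1 r2 F z = c" using AB by simp
    qed
    show ?thesis
    proof
      show "(\<exists>c. \<forall>z\<in>{-1..1}. scal n1 n2 r1 r2 F z = c) \<longleftrightarrow>
             alpha r1 r2 0 * beta n1 n2 m0 minf r1 r2 1 - alpha r1 r2 1 * beta n1 n2 m0 minf r1 r2 0 = 0"
        using const Aiff unfolding x0_def x1_def y0_def y1_def by auto
      show "\<forall>c. (\<forall>z\<in>{-1..1}. scal n1 n2 r1 r2 F z = c) \<longrightarrow> c > 0"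
      proof (intro allI impI)
        fix c assume "\<forall>z\<in>{-1..1}. scal n1 n2 r1 r2 F z = c"
        then have "A = 0" "B = c" using const by auto
        then have "c * x0 = 2*y0" using L(1) by simp
        then have "c * x0 > 0" using y0pos by simp
        then show "c > 0" using x0pos by (simp add: zero_less_mult_iff)
      qed
    qed
  qed
  define A0 where "A0 = 2*(x0*y1 - x1*y0)/(x0*x2 - x1^2)"
  define B0 where "B0 = 2*(x2*y0 - x1*y1)/(x0*x2 - x1^2)"
  have L0: "A0*x1 + B0*x0 = 2*y0" "A0*x2 + B0*x1 = 2*y1"
    using cramer[of x0 x2 x1 y1 y0] det unfolding A0_def B0_def by auto
  have eqs: "2*ea0 a b B0 + 2*ea2 r1 r2 A0 B0/3 = -E - D"
            "2*ea1 a b r1 r2 A0 B0/3 + 2*ea3 r1 r2 A0/5 = D - E"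
    using sys_iff[of n1 r1 n2 r2 B0 A0 m0 minf] L0
    unfolding x0_def x1_def x2_def y0_def y1_def eE eD eE2 a_def b_def by auto
  define F where "F = Ff a b r1 r2 A0 B0 D"
  note ends = Ff_end[OF eqs]
  define gg where "gg = (\<lambda>z. a/(1+r1*z) + b/(1+r2*z) - (A0*z+B0))"
  have f2g: "P2 a b r1 r2 A0 B0 z = pc r1 r2 z * gg z" if "-1 \<le> z" "z \<le> 1" for z
    unfolding gg_def using lin_pos[of r1 z] lin_pos[of r2 z] r1 r2 that by (intro P2_eq) auto
  have qpos: "pc r1 r2 z > 0" if "-1 \<le> z" "z \<le> 1" for z using pc_pos r1 r2 that by auto
  have gconv: "(w-x)*gg y \<le> (w-y)*gg x + (y-x)*gg w"
      if "-1 \<le> x" "x < y" "y < w" "w \<le> 1" for x y w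
    unfolding gg_def using g_conv[of a b r1 r2 x y w A0 B0] apos bpos r1 r2 that by auto
  have f1m: "0 < F1f a b r1 r2 A0 B0 D (- 1)" and f1p: "F1f a b r1 r2 A0 B0 D 1 < 0"
    using ends Dpos Epos by auto
  have fm: "Ff a b r1 r2 A0 B0 D (- 1) = 0" and fp: "Ff a b r1 r2 A0 B0 D 1 = 0" using ends by auto
  have Fpos: "F z > 0" if "-1 < z" "z < 1" for z
    unfolding F_def
    by (rule positivity[OF Ff_deriv F1f_deriv fm fp f1m f1p f2g qpos gconv that])
  have adm: "admissible_profile m0 minf r1 r2 F"
    unfolding admissible_profile_def
  proof (intro conjI)
    show "\<forall>k. \<forall>z\<in>{-1..1}. ((deriv ^^ k) F) differentiable (at z)"
      using rpf_iter[OF rpf_Ff] differentiable_at_real_polynomial_function unfolding F_def by blast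
    show "\<forall>z\<in>{-1<..<1}. F z > 0" using Fpos by auto
    show "F (-1) = 0" "F 1 = 0" using ends unfolding F_def by auto
    show "deriv F (-1) = 2 * pc r1 r2 (-1) / real_of_int minf"
      using ends unfolding F_def deriv_Ff D_def by simp
    show "deriv F 1 = - 2 * pc r1 r2 1 / real_of_int m0"
      using ends unfolding F_def deriv_Ff eE by simp
  qed
  have ext: "extremal_profile n1 n2 r1 r2 F"
    unfolding extremal_profile_def
  proof (intro exI ballI)
    fix z :: real assume z: "z \<in> {-1..1}"
    have p1: "1 + r1*z > 0" using lin_pos[of r1 z] r1 z by auto
    have p2: "1 + r2*z > 0" using lin_pos[of r2 z] r2 z by auto
    have pcz: "pc r1 r2 z > 0" using pc_pos r1 r2 z by auto
    have "(deriv ^^ 2) F z = P2 a b r1 r2 A0 B0 z"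
      unfolding F_def by (simp add: numeral_2_eq_2 deriv_Ff deriv_F1f)
    also have "\<dots> = pc r1 r2 z * (a/(1+r1*z) + b/(1+r2*z) - (A0*z+B0))"
      using p1 p2 by (intro P2_eq) auto
    finally have "(deriv ^^ 2) F z / pc r1 r2 z = a/(1+r1*z) + b/(1+r2*z) - (A0*z+B0)"
      using pcz by simp
    then show "scal n1 n2 r1 r2 F z = A0*z+B0"
      unfolding scal_def a_def b_def by simp
  qed
  show ?thesis using adm ext P2part P3 by blast
qed


end
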